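(* Let $F$ be an algebraically closed field of positive characteristic $p$, and let $\phi \in F(z)$ be a unicritical rational function. Then $\deg(\phi) \equiv 0$ or $1 \pmod p$.
   Context: A rational function $\phi \in F(z)$ is unicritical if it is nonconstant and has exactly one critical point in $\mathbb{P}^1(F)$. Critical points: for $x \in F$, choose a fractional linear transformation $\sigma$ over $F$ with $\sigma(\phi(x)) \neq \infty$; $x$ is a critical point if $\frac{d(\sigma\circ\phi)}{dz}(x) = 0$; $\infty$ is a critical point if $\frac{d(\sigma \circ \phi(1/z))}{dz}\big|_{z=0} = 0$ for such $\sigma$ with $\sigma(\phi(\infty))\neq\infty$. The degree of $\phi = f/g$ with $f,g$ coprime is $\max(\deg f, \deg g)$. *)

theory Defs
  imports "HOL-Computational_Algebra.Computational_Algebra"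
begin

text \<open>A rational function phi in F(z) is represented as phi = f/g with f, g coprime
  polynomials and g \<noteq> 0 (every element of F(z) has such a representation).\<close>

definition rat_degree :: "'a::field poly \<Rightarrow> 'a poly \<Rightarrow> nat" where
  "rat_degree f g = max (degree f) (degree g)"

definition rat_nonconstant :: "'a::field poly \<Rightarrow> 'a poly \<Rightarrow> bool" where
  "rat_nonconstant f g \<longleftrightarrow> \<not> (\<exists>c. f = smult c g)"

text \<open>Fractional linear transformations sigma(w) = (a w + b)/(c w + d) with ad - bc \<noteq> 0,
  encoded by their coefficients (a, b, c, d).\<close>
definition flt :: "'a::field \<Rightarrow> 'a \<Rightarrow> 'a \<Rightarrow> 'a \<Rightarrow> bool" where
  "flt a b c d \<longleftrightarrow> a * d - b * c \<noteq> 0"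

text \<open>Critical point criterion for a rational function given as a quotient N/D of coprime
  polynomials, at a point x in F: choose sigma = (a,b,c,d) with sigma(N(x):D(x)) \<noteq> \<infinity>,
  i.e. c N(x) + d D(x) \<noteq> 0; then sigma o (N/D) = (a N + b D)/(c N + d D) and its
  derivative at x vanishes iff P'(x) Q(x) - P(x) Q'(x) = 0 with P = aN+bD, Q = cN+dD.\<close>
definition crit_at_quot :: "'a::field poly \<Rightarrow> 'a poly \<Rightarrow> 'a \<Rightarrow> bool" where
  "crit_at_quot N D x \<longleftrightarrow>
     (\<exists>a b c d. flt a b c d \<and>
        (let P = smult a N + smult b D; Q = smult c N + smult d D in
          poly Q x \<noteq> 0 \<and>
          poly (pderiv P) x * poly Q x - poly P x * poly (pderiv Q) x = 0))"

definition rev_poly :: "nat \<Rightarrow> 'a::field poly \<Rightarrow> 'a poly" where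
  "rev_poly n p = (\<Sum>i\<le>n. monom (coeff p i) (n - i))"

text \<open>Critical points in P^1(F), with P^1(F) encoded as 'a option (None = \<infinity>).
  At \<infinity> we use phi(1/z) = (z^n f(1/z)) / (z^n g(1/z)), n = deg phi, evaluated at z = 0.\<close>
definition critical_point :: "'a::field poly \<Rightarrow> 'a poly \<Rightarrow> 'a option \<Rightarrow> bool" where
  "critical_point f g P = (case P of
      Some x \<Rightarrow> crit_at_quot f g x
    | None \<Rightarrow> crit_at_quot (rev_poly (rat_degree f g) f) (rev_poly (rat_degree f g) g) 0)"

definition unicritical :: "'a::field poly \<Rightarrow> 'a poly \<Rightarrow> bool" where
  "unicritical f g \<longleftrightarrow> rat_nonconstant f g \<and> (\<exists>!P. critical_point f g P)"

end

theory Submission imports Defs begin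

lemma crit_iff:
  fixes N D :: "'a::field poly"
  shows "crit_at_quot N D x \<longleftrightarrow> (poly N x \<noteq> 0 \<or> poly D x \<noteq> 0) \<and>
     poly (pderiv N * D - N * pderiv D) x = 0"
proof
  assume "crit_at_quot N D x"
  then obtain a b c d where fl: "flt a b c d" and
    Q: "poly (smult c N + smult d D) x \<noteq> 0" and
    W: "poly (pderiv (smult a N + smult b D)) x * poly (smult c N + smult d D) x
       - poly (smult a N + smult b D) x * poly (pderiv (smult c N + smult d D)) x = 0"
    unfolding crit_at_quot_def Let_def by blast
  have "poly (pderiv (smult a N + smult b D)) x * poly (smult c N + smult d D) x
       - poly (smult a N + smult b D) x * poly (pderiv (smult c N + smult d D)) x
     = (a*d - b*c) * poly (pderiv N * D - N * pderiv D) x"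
    by (simp add: pderiv_add pderiv_smult algebra_simps)
  with W fl have "poly (pderiv N * D - N * pderiv D) x = 0" by (simp add: flt_def)
  moreover have "poly N x \<noteq> 0 \<or> poly D x \<noteq> 0" using Q by auto
  ultimately show "(poly N x \<noteq> 0 \<or> poly D x \<noteq> 0) \<and> poly (pderiv N * D - N * pderiv D) x = 0" by blast
next
  assume h: "(poly N x \<noteq> 0 \<or> poly D x \<noteq> 0) \<and> poly (pderiv N * D - N * pderiv D) x = 0"
  show "crit_at_quot N D x"
  proof (cases "poly D x = 0")
    case True
    then show ?thesis using h unfolding crit_at_quot_def Let_def
      by (intro exI[of _ 0] exI[of _ 1] exI[of _ 1] exI[of _ 0]) (auto simp: flt_def)
  next
    case False
    then show ?thesis using h unfolding crit_at_quot_def Let_def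
      by (intro exI[of _ 1] exI[of _ 0] exI[of _ 0] exI[of _ 1]) (auto simp: flt_def)
  qed
qed

lemma coeff_rev_poly:
  assumes "k \<le> n"
  shows "coeff (rev_poly n p) k = coeff p (n - k)"
proof -
  have "coeff (rev_poly n p) k = (\<Sum>i\<le>n. if i = n - k then coeff p i else 0)"
    unfolding rev_poly_def coeff_sum coeff_monom
    by (rule sum.cong) (use assms in auto)
  also have "\<dots> = coeff p (n - k)" using assms by (simp add: sum.delta)
  finally show ?thesis .
qed

lemma coeff_mult_top:
  fixes p q :: "'a::comm_semiring_0 poly"
  assumes "degree p \<le> a" "degree q \<le> b"
  shows "coeff (p*q) (a+b) = coeff p a * coeff q b"
proof -
  have "coeff (p*q) (a+b) = (\<Sum>i\<in>{a}. coeff p i * coeff q (a+b-i))"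
    unfolding coeff_mult
  proof (rule sum.mono_neutral_right)
    show "\<forall>i\<in>{..a+b} - {a}. coeff p i * coeff q (a+b-i) = 0"
    proof
      fix i assume "i \<in> {..a+b} - {a}"
      then have "i < a \<or> i > a" by auto
      then show "coeff p i * coeff q (a+b-i) = 0"
        using assms by (auto simp: coeff_eq_0)
    qed
  qed auto
  then show ?thesis by simp
qed

lemma coeff_mult_top2:
  fixes p q :: "'a::comm_semiring_0 poly"
  assumes "degree p \<le> Suc a" "degree q \<le> Suc b"
  shows "coeff (p*q) (Suc (a+b)) = coeff p a * coeff q (Suc b) + coeff p (Suc a) * coeff q b"
proof -
  have "coeff (p*q) (Suc (a+b)) = (\<Sum>i\<in>{a, Suc a}. coeff p i * coeff q (Suc (a+b)-i))"
    unfolding coeff_mult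
  proof (rule sum.mono_neutral_right)
    show "\<forall>i\<in>{..Suc (a+b)} - {a, Suc a}. coeff p i * coeff q (Suc (a+b)-i) = 0"
    proof
      fix i assume "i \<in> {..Suc (a+b)} - {a, Suc a}"
      then have "i < a \<or> i > Suc a" by auto
      then show "coeff p i * coeff q (Suc (a+b)-i) = 0"
        using assms by (auto simp: coeff_eq_0)
    qed
  qed auto
  then show ?thesis by simp
qed

lemma char_final:
  assumes "CHAR('a::field) > 0" "of_nat (n*(n-1)) = (0::'a)"
  shows "n mod CHAR('a) = 0 \<or> n mod CHAR('a) = 1"
proof -
  have p: "prime CHAR('a)" using prime_CHAR_semidom assms(1) by blast
  have "CHAR('a) dvd n * (n-1)" using assms(2) of_nat_eq_0_iff_char_dvd by blast
  then have "CHAR('a) dvd n \<or> CHAR('a) dvd (n-1)" using p prime_dvd_mult_iff by blast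
  then show ?thesis
  proof
    assume "CHAR('a) dvd n" then show ?thesis by simp
  next
    assume d: "CHAR('a) dvd (n-1)"
    show ?thesis
    proof (cases n)
      case 0 then show ?thesis by simp
    next
      case (Suc k)
      then have "CHAR('a) dvd k" using d by simp
      moreover have "CHAR('a) > 1" using p prime_gt_1_nat by blast
      ultimately show ?thesis using Suc by (simp add: mod_Suc dvd_eq_mod_eq_0)
    qed
  qed
qed


lemma degree_pderiv_le: "degree (pderiv p) \<le> degree p - 1"
  by (rule degree_le) (auto simp: coeff_pderiv coeff_eq_0)

definition Wr :: "'a::field poly \<Rightarrow> 'a poly \<Rightarrow> 'a poly" where
  "Wr f g = pderiv f * g - f * pderiv g"

lemma no_common_root:
  fixes f g :: "'a::field poly"
  assumes "coprime f g"
  shows "poly f x \<noteq> 0 \<or> poly g x \<noteq> 0"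
proof (rule ccontr)
  assume "\<not> ?thesis"
  then have "[:-x,1:] dvd f" "[:-x,1:] dvd g" by (auto simp: poly_eq_0_iff_dvd)
  then have "is_unit [:-x,1:]" using assms coprime_common_divisor by blast
  then show False by (simp add: is_unit_iff_degree)
qed

lemma crit_Some:
  fixes f g :: "'a::field poly"
  assumes "coprime f g"
  shows "critical_point f g (Some x) \<longleftrightarrow> poly (Wr f g) x = 0"
  using no_common_root[OF assms, of x] by (simp add: critical_point_def crit_iff Wr_def)

lemma top_nonzero:
  fixes f g :: "'a::field poly"
  assumes "g \<noteq> 0"
  shows "coeff f (rat_degree f g) \<noteq> 0 \<or> coeff g (rat_degree f g) \<noteq> 0"
proof (cases "degree f \<le> degree g")
  case True
  then show ?thesis using assms by (simp add: rat_degree_def max_def)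
next
  case False
  then have "f \<noteq> 0" by auto
  then show ?thesis using False by (simp add: rat_degree_def max_def)
qed

lemma crit_None:
  fixes f g :: "'a::field poly"
  assumes "g \<noteq> 0" "rat_degree f g = Suc k"
  shows "critical_point f g None \<longleftrightarrow>
    coeff f k * coeff g (Suc k) - coeff f (Suc k) * coeff g k = 0"
proof -
  let ?n = "rat_degree f g"
  have c0: "coeff (rev_poly (Suc k) p) 0 = coeff p (Suc k)" for p :: "'a poly"
    using coeff_rev_poly[of 0 "Suc k" p] by simp
  have c1: "coeff (rev_poly (Suc k) p) (Suc 0) = coeff p k" for p :: "'a poly"
    using coeff_rev_poly[of "Suc 0" "Suc k" p] by simp
  have "poly (rev_poly ?n f) 0 \<noteq> 0 \<or> poly (rev_poly ?n g) 0 \<noteq> 0"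
    using top_nonzero[OF assms(1), of f] assms(2) by (simp add: poly_0_coeff_0 c0)
  moreover have "poly (pderiv (rev_poly ?n f) * rev_poly ?n g - rev_poly ?n f * pderiv (rev_poly ?n g)) 0
      = coeff f k * coeff g (Suc k) - coeff f (Suc k) * coeff g k"
    unfolding poly_diff poly_mult poly_0_coeff_0 using assms(2) by (simp add: coeff_pderiv c0 c1 coeff_mult_0)
  ultimately show ?thesis
    unfolding critical_point_def using assms(2) by (simp add: crit_iff del: One_nat_def)
qed

lemma Wr_coeffs:
  fixes f g :: "'a::field poly"
  assumes "degree f \<le> Suc (Suc k)" "degree g \<le> Suc (Suc k)"
  shows "degree (Wr f g) \<le> Suc (Suc (k + Suc k))"
    and "coeff (Wr f g) (Suc (Suc (k + Suc k))) = 0"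
    and "coeff (Wr f g) (Suc (k + Suc k)) = coeff f (Suc (Suc k)) * coeff g (Suc k) - coeff f (Suc k) * coeff g (Suc (Suc k))"
proof -
  have df: "degree (pderiv f) \<le> Suc k" "degree (pderiv g) \<le> Suc k"
    using assms degree_pderiv_le[of f] degree_pderiv_le[of g] by simp_all
  show "degree (Wr f g) \<le> Suc (Suc (k + Suc k))"
    unfolding Wr_def
    by (rule degree_diff_le; rule order.trans[OF degree_mult_le]) (use df assms in auto)
  have "coeff (pderiv f * g) (Suc k + Suc (Suc k)) = coeff (pderiv f) (Suc k) * coeff g (Suc (Suc k))"
    by (rule coeff_mult_top) (use df assms in auto)
  moreover have "coeff (f * pderiv g) (Suc (Suc k) + Suc k) = coeff f (Suc (Suc k)) * coeff (pderiv g) (Suc k)"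
    by (rule coeff_mult_top) (use df assms in auto)
  ultimately show "coeff (Wr f g) (Suc (Suc (k + Suc k))) = 0"
    by (simp add: Wr_def coeff_pderiv algebra_simps)
  have "coeff (pderiv f * g) (Suc (k + Suc k)) = coeff (pderiv f) k * coeff g (Suc (Suc k)) + coeff (pderiv f) (Suc k) * coeff g (Suc k)"
    by (rule coeff_mult_top2) (use df assms in auto)
  moreover have "coeff (f * pderiv g) (Suc (Suc k + k)) = coeff f (Suc k) * coeff (pderiv g) (Suc k) + coeff f (Suc (Suc k)) * coeff (pderiv g) k"
    by (rule coeff_mult_top2) (use df assms in auto)
  ultimately show "coeff (Wr f g) (Suc (k + Suc k)) = coeff f (Suc (Suc k)) * coeff g (Suc k) - coeff f (Suc k) * coeff g (Suc (Suc k))"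
    by (simp add: Wr_def coeff_pderiv algebra_simps)
qed


lemma pderiv_degree_less:
  fixes p :: "'a::field poly"
  assumes "pderiv p \<noteq> 0"
  shows "degree (pderiv p) < degree p"
proof -
  obtain i where "coeff (pderiv p) i \<noteq> 0" using assms poly_eqI[of "pderiv p" 0] by auto
  then have "coeff p (Suc i) \<noteq> 0" by (simp add: coeff_pderiv)
  then have "Suc i \<le> degree p" by (rule le_degree)
  then show ?thesis using degree_pderiv_le[of p] by linarith
qed

lemma pderiv_Wr: "pderiv (Wr f g) = pderiv (pderiv f) * g - f * pderiv (pderiv g)"
  for f g :: "'a::field poly"
  unfolding Wr_def pderiv_diff pderiv_mult by (simp add: algebra_simps)

lemma coprime_dvd_cancel:
  fixes f g :: "'a::alg_closed_field poly"
  shows "coprime f g \<Longrightarrow> f \<noteq> 0 \<Longrightarrow> f dvd h * g \<Longrightarrow> f dvd h"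
proof (induction "degree f" arbitrary: f h rule: less_induct)
  case less
  show ?case
  proof (cases "degree f = 0")
    case True
    then have "is_unit f" using less.prems(2) by (simp add: is_unit_iff_degree)
    then show ?thesis by blast
  next
    case False
    then obtain x where x: "poly f x = 0" using alg_closed_imp_poly_has_root by blast
    then obtain f1 where f1: "f = [:-x,1:] * f1" by (auto simp: poly_eq_0_iff_dvd elim: dvdE)
    have gx: "poly g x \<noteq> 0" using no_common_root[OF less.prems(1), of x] x by simp
    have "[:-x,1:] dvd h * g" using f1 less.prems(3) dvd_mult_left by blast
    then have "poly h x * poly g x = 0" by (simp add: poly_eq_0_iff_dvd[symmetric])
    then have "poly h x = 0" using gx by simp
    then obtain h1 where h1: "h = [:-x,1:] * h1" by (auto simp: poly_eq_0_iff_dvd elim: dvdE)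
    have f1nz: "f1 \<noteq> 0" using f1 less.prems(2) by auto
    have "degree ([:-x,1:] * f1) = degree [:-x,1:] + degree f1"
      by (rule degree_mult_eq) (use f1nz in auto)
    then have df: "degree f = Suc (degree f1)" using f1 by simp
    have cop: "coprime f1 g"
    proof (rule coprimeI)
      fix c assume "c dvd f1" "c dvd g"
      then show "is_unit c" using coprime_common_divisor[OF less.prems(1)] f1 by (meson dvd_mult)
    qed
    have "[:-x,1:] * f1 dvd [:-x,1:] * (h1 * g)" using less.prems(3) unfolding f1 h1 by (simp only: mult.assoc)
    moreover have "[:-x,1:] \<noteq> 0" by simp
    ultimately have "f1 dvd h1 * g" using dvd_mult_cancel_left by blast
    then have "f1 dvd h1" using less.hyps[of f1 h1] df cop f1nz by simp
    then show ?thesis unfolding f1 h1 by (rule mult_dvd_mono[OF dvd_refl])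
  qed
qed

lemma dvd_deriv2_zero:
  fixes f g :: "'a::alg_closed_field poly"
  assumes "coprime f g" "f \<noteq> 0" "pderiv (pderiv f) * g = f * pderiv (pderiv g)"
  shows "pderiv (pderiv f) = 0"
proof (rule ccontr)
  assume nz: "pderiv (pderiv f) \<noteq> 0"
  have "f dvd pderiv (pderiv f) * g" unfolding assms(3) by (rule dvd_triv_left)
  then have "f dvd pderiv (pderiv f)" using coprime_dvd_cancel assms(1,2) by blast
  then have "degree f \<le> degree (pderiv (pderiv f))" using nz by (rule dvd_imp_degree_le)
  moreover have "pderiv f \<noteq> 0" using nz by (metis pderiv_0)
  ultimately show False using pderiv_degree_less[OF nz] pderiv_degree_less[of f] by linarith
qed

lemma case1:
  fixes f g :: "'a::alg_closed_field poly"
  assumes "coprime f g" "f \<noteq> 0" "g \<noteq> 0" "pderiv (Wr f g) = 0"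
    and n: "rat_degree f g = Suc (Suc k)"
  shows "of_nat (Suc (Suc k) * (Suc (Suc k) - 1)) = (0::'a)"
proof -
  have e: "pderiv (pderiv f) * g = f * pderiv (pderiv g)" using assms(4) pderiv_Wr[of f g] by simp
  have f2: "pderiv (pderiv f) = 0" by (rule dvd_deriv2_zero[OF assms(1,2) e])
  have g2: "pderiv (pderiv g) = 0"
  proof (rule dvd_deriv2_zero[of g f])
    show "coprime g f" using assms(1) by (simp add: coprime_commute)
    show "g \<noteq> 0" by fact
    show "pderiv (pderiv g) * f = g * pderiv (pderiv f)" using e by (simp add: ac_simps)
  qed
  have "coeff (pderiv (pderiv h)) k = of_nat (Suc k) * of_nat (Suc (Suc k)) * coeff h (Suc (Suc k))" for h :: "'a poly"
    by (simp add: coeff_pderiv)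
  from this[of f] this[of g] f2 g2 top_nonzero[OF assms(3), of f] n
  have "of_nat (Suc k) * of_nat (Suc (Suc k)) = (0::'a)" by auto
  then show ?thesis by (simp only: of_nat_mult diff_Suc_1 mult.commute)
qed


lemma cL: "coeff ([:-x0,1:] * p) (Suc j) = coeff p j - x0 * coeff p (Suc j)"
  for p :: "'a::field poly"
  by (simp add: algebra_simps)

definition opA :: "'a::field \<Rightarrow> nat \<Rightarrow> 'a poly \<Rightarrow> 'a poly" where
  "opA x0 k h = [:-x0,1:] * ([:-x0,1:] * pderiv (pderiv h))
     - smult (of_nat (2*k+2)) ([:-x0,1:] * pderiv h) + smult (of_nat ((k+2)*(k+1))) h"

lemma ring_identity:
  fixes L f g f1 f2 g1 g2 :: "'a::field poly"
  shows "(L * (L * f2) - smult a (L * f1) + smult b f) * g - f * (L * (L * g2) - smult a (L * g1) + smult b g)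
    = L * (L * (f2 * g - f * g2) - smult a (f1 * g - f * g1))"
  by (simp add: algebra_simps smult_add_right smult_diff_right)

lemma opA_identity:
  fixes f g :: "'a::field poly"
  shows "opA x0 k f * g - f * opA x0 k g =
    [:-x0,1:] * ([:-x0,1:] * pderiv (Wr f g) - smult (of_nat (2*k+2)) (Wr f g))"
  unfolding opA_def pderiv_Wr unfolding Wr_def by (rule ring_identity)

lemma opA_poly: "poly (opA x0 k h) x0 = of_nat ((k+2)*(k+1)) * poly h x0"
  by (simp add: opA_def)

lemma opA_degree:
  fixes h :: "'a::field poly"
  assumes "degree h \<le> Suc (Suc k)"
  shows "degree (opA x0 k h) \<le> Suc k"
proof -
  have d1: "degree (pderiv h) \<le> Suc k" using assms degree_pderiv_le[of h] by simp
  have d2: "degree (pderiv (pderiv h)) \<le> k" using d1 degree_pderiv_le[of "pderiv h"] by simp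
  have dL: "degree ([:-x0,1:] * p) \<le> Suc (degree p)" for p :: "'a poly"
    using degree_mult_le[of "[:-x0,1:]" p] by simp
  have "degree (opA x0 k h) \<le> Suc (Suc k)"
    unfolding opA_def
  proof (intro degree_add_le degree_diff_le)
    show "degree ([:-x0,1:] * ([:-x0,1:] * pderiv (pderiv h))) \<le> Suc (Suc k)"
      using dL[of "[:-x0,1:] * pderiv (pderiv h)"] dL[of "pderiv (pderiv h)"] d2 by linarith
    show "degree (smult (of_nat (2*k+2)) ([:-x0,1:] * pderiv h)) \<le> Suc (Suc k)"
      using degree_smult_le[of "of_nat (2*k+2)" "[:-x0,1:] * pderiv h"] dL[of "pderiv h"] d1 by linarith
    show "degree (smult (of_nat ((k+2)*(k+1))) h) \<le> Suc (Suc k)"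
      using degree_smult_le[of "of_nat ((k+2)*(k+1))" h] assms by linarith
  qed
  moreover have "coeff (opA x0 k h) (Suc (Suc k)) = 0"
  proof -
    have z: "coeff h (Suc (Suc (Suc k))) = 0" "coeff h (Suc (Suc (Suc (Suc k)))) = 0"
      using assms by (auto intro: coeff_eq_0)
    have e1: "coeff ([:-x0,1:] * ([:-x0,1:] * pderiv (pderiv h))) (Suc (Suc k))
        = of_nat (Suc k) * of_nat (Suc (Suc k)) * coeff h (Suc (Suc k))"
      unfolding cL using z by (simp add: coeff_pderiv)
    have e2: "coeff ([:-x0,1:] * pderiv h) (Suc (Suc k)) = of_nat (Suc (Suc k)) * coeff h (Suc (Suc k))"
      unfolding cL using z by (simp add: coeff_pderiv)
    have "coeff (opA x0 k h) (Suc (Suc k)) =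
       coeff ([:-x0,1:] * ([:-x0,1:] * pderiv (pderiv h))) (Suc (Suc k))
       - of_nat (2*k+2) * coeff ([:-x0,1:] * pderiv h) (Suc (Suc k))
       + of_nat ((k+2)*(k+1)) * coeff h (Suc (Suc k))"
      unfolding opA_def coeff_add coeff_diff coeff_smult ..
    also have "\<dots> = (of_nat (Suc k) * of_nat (Suc (Suc k)) - of_nat (2*k+2) * of_nat (Suc (Suc k))
        + of_nat ((k+2)*(k+1))) * coeff h (Suc (Suc k))"
      unfolding e1 e2 by (simp only: algebra_simps)
    also have "of_nat (Suc k) * of_nat (Suc (Suc k)) - of_nat (2*k+2) * of_nat (Suc (Suc k))
        + of_nat ((k+2)*(k+1)) = (0::'a)"
      by (simp only: of_nat_mult of_nat_add of_nat_Suc) (simp add: algebra_simps)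
    finally show ?thesis by simp
  qed
  ultimately show ?thesis
  proof -
    assume a: "degree (opA x0 k h) \<le> Suc (Suc k)" "coeff (opA x0 k h) (Suc (Suc k)) = 0"
    show ?thesis
    proof (rule ccontr)
      assume "\<not> ?thesis"
      then have "degree (opA x0 k h) = Suc (Suc k)" using a(1) by simp
      then have "lead_coeff (opA x0 k h) = 0" using a(2) by simp
      then have "opA x0 k h = 0" by simp
      with \<open>degree (opA x0 k h) = Suc (Suc k)\<close> show False by simp
    qed
  qed
qed


lemma case2:
  fixes f g :: "'a::alg_closed_field poly"
  assumes cop: "coprime f g" and "f \<noteq> 0" "g \<noteq> 0"
    and n: "rat_degree f g = Suc (Suc k)"
    and hW: "[:-x0,1:] * pderiv (Wr f g) = smult (of_nat (2*k+2)) (Wr f g)"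
  shows "of_nat ((k+2)*(k+1)) = (0::'a)"
proof -
  have df: "degree f \<le> Suc (Suc k)" and dg: "degree g \<le> Suc (Suc k)"
    using n by (auto simp: rat_degree_def)
  have "opA x0 k f * g - f * opA x0 k g = 0"
    unfolding opA_identity hW by simp
  then have id: "opA x0 k f * g = f * opA x0 k g" by simp
  have "f dvd opA x0 k f * g" unfolding id by simp
  then have "f dvd opA x0 k f" using coprime_dvd_cancel cop assms(2) by blast
  then obtain q where q: "opA x0 k f = f * q" by (elim dvdE)
  have "f * (q * g) = f * opA x0 k g" using id q by (simp add: ac_simps)
  then have qg: "opA x0 k g = q * g" using assms(2) by simp
  have q0: "q = 0"
  proof (rule ccontr)
    assume qnz: "q \<noteq> 0"
    have "\<exists>h. h \<noteq> 0 \<and> Suc (Suc k) \<le> degree h \<and> opA x0 k h = q * h \<and> degree h \<le> Suc (Suc k)"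
    proof (cases "coeff f (Suc (Suc k)) \<noteq> 0")
      case True
      then have "Suc (Suc k) \<le> degree f" by (rule le_degree)
      then show ?thesis using q df assms(2) by (intro exI[of _ f]) (auto simp: ac_simps)
    next
      case False
      then have "coeff g (Suc (Suc k)) \<noteq> 0" using top_nonzero[OF assms(3), of f] n by simp
      then have "Suc (Suc k) \<le> degree g" by (rule le_degree)
      then show ?thesis using qg dg assms(3) by (intro exI[of _ g]) auto
    qed
    then obtain h where h: "h \<noteq> 0" "Suc (Suc k) \<le> degree h" "opA x0 k h = q * h" "degree h \<le> Suc (Suc k)"
      by blast
    have "degree (q * h) = degree q + degree h" using qnz h(1) by (rule degree_mult_eq)
    moreover have "degree (opA x0 k h) \<le> Suc k" using opA_degree[OF h(4)] .
    ultimately show False using h(2,3) by simp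
  qed
  have "poly (opA x0 k f) x0 = 0" "poly (opA x0 k g) x0 = 0" using q qg q0 by simp_all
  then show ?thesis using no_common_root[OF cop, of x0] by (auto simp: opA_poly)
qed


theorem corollary1p3:
  fixes f g :: "'a::alg_closed_field poly"
  assumes "CHAR('a) > 0"
    and "g \<noteq> 0" and "coprime f g"
    and "unicritical f g"
  shows "rat_degree f g mod CHAR('a) = 0 \<or> rat_degree f g mod CHAR('a) = 1"
proof -
  define n where "n = rat_degree f g"
  have key: "of_nat (n * (n - 1)) = (0::'a)"
  proof (cases "n < 2")
    case True
    then have z: "n * (n - 1) = 0" by (cases n) auto
    show ?thesis unfolding z by simp
  next
    case False
    then obtain k where nk: "n = Suc (Suc k)" by (metis add_2_eq_Suc le_Suc_ex not_less)
    have nk': "rat_degree f g = Suc (Suc k)" using nk n_def by simp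
    have fnz: "f \<noteq> 0"
    proof
      assume "f = 0"
      then have "f = smult 0 g" by simp
      then show False using assms(4) unfolding unicritical_def rat_nonconstant_def by blast
    qed
    from assms(4) obtain P where P: "critical_point f g P"
      and uniq: "\<And>Q. critical_point f g Q \<Longrightarrow> Q = P"
      unfolding unicritical_def by blast
    show ?thesis
    proof (cases P)
      case None
      have noroot: "poly (Wr f g) x \<noteq> 0" for x
      proof
        assume "poly (Wr f g) x = 0"
        then have "critical_point f g (Some x)" using crit_Some[OF assms(3)] by simp
        then show False using uniq None by blast
      qed
      have "degree (Wr f g) = 0"
      proof (rule ccontr)
        assume "degree (Wr f g) \<noteq> 0"
        then obtain x where "poly (Wr f g) x = 0" using alg_closed_imp_poly_has_root by blast
        then show False using noroot by blast
      qed
      then have "pderiv (Wr f g) = 0" using pderiv_degree_less[of "Wr f g"] by (cases "pderiv (Wr f g) = 0") auto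
      from case1[OF assms(3) fnz assms(2) this nk'] show ?thesis using nk by simp
    next
      case (Some x0)
      have roots: "poly (Wr f g) y = 0 \<longleftrightarrow> y = x0" for y
        using crit_Some[OF assms(3), of y] uniq[of "Some y"] P Some by auto
      have "\<not> critical_point f g None" using uniq[of None] Some by auto
      then have "coeff f (Suc k) * coeff g (Suc (Suc k)) - coeff f (Suc (Suc k)) * coeff g (Suc k) \<noteq> 0"
        using crit_None[OF assms(2) nk'] by simp
      have df: "degree f \<le> Suc (Suc k)" and dg: "degree g \<le> Suc (Suc k)"
        using nk' by (auto simp: rat_degree_def)
      have eq: "coeff (Wr f g) (Suc (k + Suc k)) = - (coeff f (Suc k) * coeff g (Suc (Suc k)) - coeff f (Suc (Suc k)) * coeff g (Suc k))"
        using Wr_coeffs(3)[OF df dg] by (simp only: minus_diff_eq mult.commute)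
      have cW: "coeff (Wr f g) (Suc (k + Suc k)) \<noteq> 0"
        unfolding eq using \<open>coeff f (Suc k) * _ - _ \<noteq> 0\<close> by simp
      have Wnz: "Wr f g \<noteq> 0" using cW by auto
      obtain r where r: "Wr f g = [:-x0,1:] ^ order x0 (Wr f g) * r" and nd: "\<not> [:-x0,1:] dvd r"
        using order_decomp[OF Wnz] by blast
      define m where "m = order x0 (Wr f g)"
      have rnz: "r \<noteq> 0" using nd by auto
      have "degree r = 0"
      proof (rule ccontr)
        assume "degree r \<noteq> 0"
        then obtain y where y: "poly r y = 0" using alg_closed_imp_poly_has_root by blast
        then have "poly (Wr f g) y = 0" by (subst r) simp
        then have "y = x0" using roots by blast
        then show False using y nd by (simp add: poly_eq_0_iff_dvd)
      qed
      then have rc: "r = [:coeff r 0:]" using degree_0_id by metis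
      have degW: "degree (Wr f g) = m"
      proof -
        have "degree ([:-x0,1:] ^ m * r) = degree ([:-x0,1:] ^ m) + degree r"
          by (rule degree_mult_eq) (use rnz in auto)
        then show ?thesis using r \<open>degree r = 0\<close> degree_linear_power[of "-x0" m] m_def by simp
      qed
      have m1: "Suc (k + Suc k) \<le> m" using le_degree[OF cW] degW by simp
      have m2: "m \<le> Suc (Suc (k + Suc k))" using Wr_coeffs(1)[OF df dg] degW by simp
      have m3: "m \<noteq> Suc (Suc (k + Suc k))"
      proof
        assume "m = Suc (Suc (k + Suc k))"
        then have "lead_coeff (Wr f g) = 0" using Wr_coeffs(2)[OF df dg] degW by simp
        then show False using Wnz by simp
      qed
      have mval: "m = Suc (k + Suc k)" using m1 m2 m3 by simp
      have hW: "[:-x0,1:] * pderiv (Wr f g) = smult (of_nat (2*k+2)) (Wr f g)"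
      proof -
        define c where "c = coeff r 0"
        have W: "Wr f g = [:-x0,1:] ^ Suc (k + Suc k) * [:c:]"
          using r rc mval m_def c_def by metis
        have pd: "pderiv (Wr f g) = [:c:] * (smult (of_nat (Suc (k + Suc k))) ([:-x0,1:] ^ (k + Suc k)))"
          unfolding W pderiv_mult pderiv_power_Suc by (simp add: pderiv_pCons)
        have gen: "L * ([:c:] * smult a (L ^ j)) = smult a (L ^ Suc j * [:c:])"
          for L :: "'a poly" and a and j :: nat
          by (simp add: algebra_simps)
        have tk: "2*k+2 = Suc (k + Suc k)" by simp
        have "[:-x0,1:] * pderiv (Wr f g) = [:-x0,1:] * ([:c:] * (smult (of_nat (Suc (k + Suc k))) ([:-x0,1:] ^ (k + Suc k))))"
          by (simp only: pd)
        also have "\<dots> = smult (of_nat (Suc (k + Suc k))) ([:-x0,1:] ^ Suc (k + Suc k) * [:c:])"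
          by (rule gen)
        also have "\<dots> = smult (of_nat (2*k+2)) (Wr f g)"
          by (simp only: W tk)
        finally show ?thesis .
      qed
      from case2[OF assms(3) fnz assms(2) nk' hW] show ?thesis using nk
        by (simp add: mult.commute)
    qed
  qed
  show ?thesis using char_final[OF assms(1) key] n_def by simp
qed

end
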